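(* Let $(S,\mathcal F,\mathcal L)$ be a $p$-local finite group and let $V\le Z(S)$ be an $\mathcal F$-weakly closed subgroup such that $\mathrm{Aut}_{\mathcal F}(V)$ is a $p$-group. Then $V$ is central in $(S,\mathcal F,\mathcal L)$, that is, $(S,\mathcal F,\mathcal L)=(C_S(V),C_{\mathcal F}(V),C_{\mathcal L}(V))$; in particular $\mathcal F=C_{\mathcal F}(V)$.
   Context: A subgroup of $S$ is $\mathcal F$-weakly closed if no other subgroup of $S$ is $\mathcal F$-conjugate to it. For $Q\le S$, the centralizer fusion system $C_{\mathcal F}(Q)$ is the fusion system over $C_S(Q)$ with $\mathrm{Hom}_{C_{\mathcal F}(Q)}(P,P')=\{\phi\in\mathrm{Hom}_{\mathcal F}(P,P')\mid\exists\psi\in\mathrm{Hom}_{\mathcal F}(PQ,P'Q),\ \psi|_P=\phi,\ \psi|_Q=\mathrm{id}\}$. For $V\le Z(S)$ (so $C_S(V)=S$), $C_{\mathcal L}(V)$ denotes the subcategory of $\mathcal L$ with $\mathrm{Mor}_{C_{\mathcal L}(V)}(P,Q)=\pi^{-1}(\mathrm{Hom}_{C_{\mathcal F}(V)}(P,Q))$ for $\mathcal F$-centric $P,Q$. Let $p$ be a prime and $S$ a finite $p$-group. For $P,Q\le S$, $\mathrm{Hom}_S(P,Q)$ is the set of maps $c_g\colon x\mapsto gxg^{-1}$ with $g\in S$, $gPg^{-1}\le Q$, and $\mathrm{Aut}_S(P)=\mathrm{Hom}_S(P,P)$. A fusion system $\mathcal F$ over $S$ is a category whose objects are the subgroups of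 $S$, with $\mathrm{Hom}_S(P,Q)\subseteq\mathrm{Hom}_{\mathcal F}(P,Q)\subseteq \mathrm{Inj}(P,Q)$, such that every morphism factors as an $\mathcal F$-isomorphism followed by an inclusion. Subgroups are $\mathcal F$-conjugate if they are isomorphic in $\mathcal F$. $P$ is fully centralized (resp. fully normalized) if $|C_S(P)|\ge |C_S(P')|$ (resp. $|N_S(P)|\ge|N_S(P')|$) for all $P'$ $\mathcal F$-conjugate to $P$. $\mathcal F$ is saturated if (I) every fully normalized $P$ is fully centralized and $\mathrm{Aut}_S(P)$ is a Sylow $p$-subgroup of $\mathrm{Aut}_{\mathcal F}(P)$, and (II) whenever $\phi\in\mathrm{Hom}_{\mathcal F}(P,S)$ with $\phi(P)$ fully centralized, $\phi$ extends to a morphism in $\mathcal F$ defined on $N_\phi=\{g\in N_S(P):\phi c_g\phi^{-1}\in \mathrm{Aut}_S(\phi(P))\}$. $P$ is $\mathcal F$-centric if $C_S(P')\le P'$ for all $P'$ $\mathcal F$-conjugate to $P$; $\mathcal F^c$ is the full subcategory on these. A centric linking system associated to $\mathcal F$ is a category $\mathcal L$ with objects the $\mathcal F$-centric subgroups, a functor $\pi\colon\mathcal L\to\mathcal F^c$ which is the identity on objects, and monomorphisms $\delta_P\colon P\to\mathrm{Aut}_{\mathcal L}(P)$, such that (A) $Z(P)$ (via $\delta_P$) acts freely on $\mathrm{Mor}_{\mathcal L}(P,Q)$ by composition and $\pi$ induces a bijection $\mathrm{Mor}_{\mathcal L}(P,Q)/Z(P)\to\mathrm{Hom}_{\mathcal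 F}(P,Q)$; (B) $\pi(\delta_P(g))=c_g$ for $g\in P$; (C) $f\circ\delta_P(g)=\delta_Q(\pi(f)(g))\circ f$ for $f\in\mathrm{Mor}_{\mathcal L}(P,Q)$, $g\in P$. A $p$-local finite group is a triple $(S,\mathcal F,\mathcal L)$ with $\mathcal F$ a saturated fusion system over $S$ and $\mathcal L$ an associated centric linking system. *)

theory Defs
  imports "HOL-Algebra.Group_Action" "HOL-Computational_Algebra.Primes"
begin

text \<open>Morphisms between subgroups P, Q of S are functions 'a => 'a which are extensional
on their domain P (i.e. identified with their restriction to P).\<close>

definition conjm :: "('a, 'b) monoid_scheme \<Rightarrow> 'a \<Rightarrow> 'a \<Rightarrow> 'a" where
  "conjm S g = (\<lambda>x. g \<otimes>\<^bsub>S\<^esub> x \<otimes>\<^bsub>S\<^esub> inv\<^bsub>S\<^esub> g)"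

definition HomS :: "('a, 'b) monoid_scheme \<Rightarrow> 'a set \<Rightarrow> 'a set \<Rightarrow> ('a \<Rightarrow> 'a) set" where
  "HomS S P Q = {restrict (conjm S g) P | g. g \<in> carrier S \<and> conjm S g ` P \<subseteq> Q}"

definition InjHom :: "('a, 'b) monoid_scheme \<Rightarrow> 'a set \<Rightarrow> 'a set \<Rightarrow> ('a \<Rightarrow> 'a) set" where
  "InjHom S P Q = {\<phi>. \<phi> \<in> extensional P \<and> \<phi> ` P \<subseteq> Q \<and> inj_on \<phi> P \<and>
      (\<forall>x\<in>P. \<forall>y\<in>P. \<phi> (x \<otimes>\<^bsub>S\<^esub> y) = \<phi> x \<otimes>\<^bsub>S\<^esub> \<phi> y)}"

definition finite_p_group :: "nat \<Rightarrow> ('a, 'b) monoid_scheme \<Rightarrow> bool" where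
  "finite_p_group p S \<longleftrightarrow> prime p \<and> group S \<and> finite (carrier S) \<and>
      (\<exists>n. card (carrier S) = p ^ n)"

text \<open>A fusion system over S: Hom_F(P,Q) = F P Q for subgroups P, Q of S.\<close>
definition fusion_system :: "('a, 'b) monoid_scheme \<Rightarrow> ('a set \<Rightarrow> 'a set \<Rightarrow> ('a \<Rightarrow> 'a) set) \<Rightarrow> bool" where
  "fusion_system S F \<longleftrightarrow>
     (\<forall>P Q. subgroup P S \<longrightarrow> subgroup Q S \<longrightarrow> HomS S P Q \<subseteq> F P Q \<and> F P Q \<subseteq> InjHom S P Q)
   \<and> (\<forall>P Q R \<phi> \<psi>. subgroup P S \<longrightarrow> subgroup Q S \<longrightarrow> subgroup R S \<longrightarrow>
        \<phi> \<in> F P Q \<longrightarrow> \<psi> \<in> F Q R \<longrightarrow> restrict (\<psi> \<circ> \<phi>) P \<in> F P R)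
   \<and> (\<forall>P Q \<phi>. subgroup P S \<longrightarrow> subgroup Q S \<longrightarrow> \<phi> \<in> F P Q \<longrightarrow>
        \<phi> \<in> F P (\<phi> ` P) \<and> restrict (inv_into P \<phi>) (\<phi> ` P) \<in> F (\<phi> ` P) P)"

definition F_conj :: "('a, 'b) monoid_scheme \<Rightarrow> ('a set \<Rightarrow> 'a set \<Rightarrow> ('a \<Rightarrow> 'a) set) \<Rightarrow> 'a set \<Rightarrow> 'a set \<Rightarrow> bool" where
  "F_conj S F P P' \<longleftrightarrow> subgroup P S \<and> subgroup P' S \<and>
     (\<exists>\<phi>\<in>F P P'. \<phi> ` P = P' \<and> restrict (inv_into P \<phi>) P' \<in> F P' P)"

definition centralizerS :: "('a, 'b) monoid_scheme \<Rightarrow> 'a set \<Rightarrow> 'a set" where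
  "centralizerS S P = {g \<in> carrier S. \<forall>x\<in>P. g \<otimes>\<^bsub>S\<^esub> x = x \<otimes>\<^bsub>S\<^esub> g}"

definition centerS :: "('a, 'b) monoid_scheme \<Rightarrow> 'a set \<Rightarrow> 'a set" where
  "centerS S P = {z \<in> P. \<forall>x\<in>P. z \<otimes>\<^bsub>S\<^esub> x = x \<otimes>\<^bsub>S\<^esub> z}"

definition fully_centralized where
  "fully_centralized S F P \<longleftrightarrow> (\<forall>P'. F_conj S F P P' \<longrightarrow> card (centralizerS S P') \<le> card (centralizerS S P))"

definition fully_normalized where
  "fully_normalized S F P \<longleftrightarrow> (\<forall>P'. F_conj S F P P' \<longrightarrow> card (normalizer S P') \<le> card (normalizer S P))"

definition sylow_subset :: "nat \<Rightarrow> 'c set \<Rightarrow> 'c set \<Rightarrow> bool" where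
  "sylow_subset p H K \<longleftrightarrow> H \<subseteq> K \<and> (\<exists>n. card H = p ^ n) \<and> card H dvd card K \<and>
      \<not> p dvd (card K div card H)"

definition N_phi where
  "N_phi S F P \<phi> = {g \<in> normalizer S P.
      restrict (\<phi> \<circ> conjm S g \<circ> inv_into P \<phi>) (\<phi> ` P) \<in> HomS S (\<phi> ` P) (\<phi> ` P)}"

definition saturated_fusion_system where
  "saturated_fusion_system p S F \<longleftrightarrow> finite_p_group p S \<and> fusion_system S F
   \<and> (\<forall>P. subgroup P S \<longrightarrow> fully_normalized S F P \<longrightarrow>
        fully_centralized S F P \<and> sylow_subset p (HomS S P P) (F P P))
   \<and> (\<forall>P \<phi>. subgroup P S \<longrightarrow> \<phi> \<in> F P (carrier S) \<longrightarrow> fully_centralized S F (\<phi> ` P) \<longrightarrow>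
        (\<exists>\<psi> \<in> F (N_phi S F P \<phi>) (carrier S). \<forall>x\<in>P. \<psi> x = \<phi> x))"

definition F_centric where
  "F_centric S F P \<longleftrightarrow> subgroup P S \<and> (\<forall>P'. F_conj S F P P' \<longrightarrow> centralizerS S P' \<subseteq> P')"

text \<open>A category L with objects the F-centric subgroups: morphism sets, composition
(comp f g = f after g), identities, the functor pi (on morphisms P -> Q) and delta_P.\<close>
record ('a, 'm) linking =
  Mor :: "'a set \<Rightarrow> 'a set \<Rightarrow> 'm set"
  comp :: "'m \<Rightarrow> 'm \<Rightarrow> 'm"
  ident :: "'a set \<Rightarrow> 'm"
  proj :: "'a set \<Rightarrow> 'a set \<Rightarrow> 'm \<Rightarrow> ('a \<Rightarrow> 'a)"
  delta :: "'a set \<Rightarrow> 'a \<Rightarrow> 'm"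

definition centric_linking_system where
  "centric_linking_system S F L \<longleftrightarrow>
   (let C = F_centric S F in
   \<comment> \<open>category\<close>
     (\<forall>P Q R f g. C P \<longrightarrow> C Q \<longrightarrow> C R \<longrightarrow> g \<in> Mor L P Q \<longrightarrow> f \<in> Mor L Q R \<longrightarrow>
        comp L f g \<in> Mor L P R)
   \<and> (\<forall>P Q R T f g h. C P \<longrightarrow> C Q \<longrightarrow> C R \<longrightarrow> C T \<longrightarrow> h \<in> Mor L P Q \<longrightarrow> g \<in> Mor L Q R \<longrightarrow>
        f \<in> Mor L R T \<longrightarrow> comp L f (comp L g h) = comp L (comp L f g) h)
   \<and> (\<forall>P. C P \<longrightarrow> ident L P \<in> Mor L P P)
   \<and> (\<forall>P Q f. C P \<longrightarrow> C Q \<longrightarrow> f \<in> Mor L P Q \<longrightarrow>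
        comp L (ident L Q) f = f \<and> comp L f (ident L P) = f)
   \<comment> \<open>functor pi to F^c, identity on objects\<close>
   \<and> (\<forall>P Q f. C P \<longrightarrow> C Q \<longrightarrow> f \<in> Mor L P Q \<longrightarrow> proj L P Q f \<in> F P Q)
   \<and> (\<forall>P. C P \<longrightarrow> proj L P P (ident L P) = restrict id P)
   \<and> (\<forall>P Q R f g. C P \<longrightarrow> C Q \<longrightarrow> C R \<longrightarrow> g \<in> Mor L P Q \<longrightarrow> f \<in> Mor L Q R \<longrightarrow>
        proj L P R (comp L f g) = restrict (proj L Q R f \<circ> proj L P Q g) P)
   \<comment> \<open>delta_P : P -> Aut_L(P) injective homomorphism\<close>
   \<and> (\<forall>P. C P \<longrightarrow> (\<forall>g\<in>P. delta L P g \<in> Mor L P P) \<and> inj_on (delta L P) P \<and>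
        (\<forall>g\<in>P. \<forall>h\<in>P. delta L P (g \<otimes>\<^bsub>S\<^esub> h) = comp L (delta L P g) (delta L P h)))
   \<comment> \<open>(A)\<close>
   \<and> (\<forall>P Q. C P \<longrightarrow> C Q \<longrightarrow>
        (\<forall>f\<in>Mor L P Q. \<forall>z\<in>centerS S P. comp L f (delta L P z) = f \<longrightarrow> z = \<one>\<^bsub>S\<^esub>)
      \<and> proj L P Q ` Mor L P Q = F P Q
      \<and> (\<forall>f\<in>Mor L P Q. \<forall>f'\<in>Mor L P Q. proj L P Q f = proj L P Q f' \<longleftrightarrow>
            (\<exists>z\<in>centerS S P. f' = comp L f (delta L P z))))
   \<comment> \<open>(B)\<close>
   \<and> (\<forall>P g. C P \<longrightarrow> g \<in> P \<longrightarrow> proj L P P (delta L P g) = restrict (conjm S g) P)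
   \<comment> \<open>(C)\<close>
   \<and> (\<forall>P Q f g. C P \<longrightarrow> C Q \<longrightarrow> f \<in> Mor L P Q \<longrightarrow> g \<in> P \<longrightarrow>
        comp L f (delta L P g) = comp L (delta L Q (proj L P Q f g)) f))"

definition p_local_finite_group where
  "p_local_finite_group p S F L \<longleftrightarrow> saturated_fusion_system p S F \<and> centric_linking_system S F L"

definition F_weakly_closed where
  "F_weakly_closed S F V \<longleftrightarrow> subgroup V S \<and> (\<forall>V'. F_conj S F V V' \<longrightarrow> V' = V)"

definition CF :: "('a, 'b) monoid_scheme \<Rightarrow> ('a set \<Rightarrow> 'a set \<Rightarrow> ('a \<Rightarrow> 'a) set) \<Rightarrow> 'a set
    \<Rightarrow> 'a set \<Rightarrow> 'a set \<Rightarrow> ('a \<Rightarrow> 'a) set" where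
  "CF S F Q P P' = {\<phi> \<in> F P P'. \<exists>\<psi> \<in> F (P <#>\<^bsub>S\<^esub> Q) (P' <#>\<^bsub>S\<^esub> Q).
       (\<forall>x\<in>P. \<psi> x = \<phi> x) \<and> (\<forall>x\<in>Q. \<psi> x = x)}"

text \<open>Morphism sets of C_L(V) for V central: pi^{-1}(Hom_{C_F(V)}(P,Q)).\<close>
definition CL_Mor where
  "CL_Mor S F L V P Q = {f \<in> Mor L P Q. proj L P Q f \<in> CF S F V P Q}"

end

theory Submission
  imports Defs
begin


lemma fs_HomS: "fusion_system S F \<Longrightarrow> subgroup P S \<Longrightarrow> subgroup Q S \<Longrightarrow> \<phi> \<in> HomS S P Q \<Longrightarrow> \<phi> \<in> F P Q"
  unfolding fusion_system_def by blast
lemma fs_Inj: "fusion_system S F \<Longrightarrow> subgroup P S \<Longrightarrow> subgroup Q S \<Longrightarrow> \<phi> \<in> F P Q \<Longrightarrow> \<phi> \<in> InjHom S P Q"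
  unfolding fusion_system_def by blast
lemma fs_comp: "fusion_system S F \<Longrightarrow> subgroup P S \<Longrightarrow> subgroup Q S \<Longrightarrow> subgroup R S \<Longrightarrow>
        \<phi> \<in> F P Q \<Longrightarrow> \<psi> \<in> F Q R \<Longrightarrow> restrict (\<psi> \<circ> \<phi>) P \<in> F P R"
  unfolding fusion_system_def by blast
lemma fs_img: "fusion_system S F \<Longrightarrow> subgroup P S \<Longrightarrow> subgroup Q S \<Longrightarrow> \<phi> \<in> F P Q \<Longrightarrow> \<phi> \<in> F P (\<phi> ` P)"
  unfolding fusion_system_def by blast
lemma fs_inv: "fusion_system S F \<Longrightarrow> subgroup P S \<Longrightarrow> subgroup Q S \<Longrightarrow> \<phi> \<in> F P Q \<Longrightarrow> restrict (inv_into P \<phi>) (\<phi> ` P) \<in> F (\<phi> ` P) P"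
  unfolding fusion_system_def by blast

context group begin

lemma hom_one:
  assumes P: "subgroup P G" and img: "\<phi> ` P \<subseteq> carrier G"
    and hom: "\<forall>x\<in>P. \<forall>y\<in>P. \<phi> (x \<otimes> y) = \<phi> x \<otimes> \<phi> y"
  shows "\<phi> \<one> = \<one>"
proof -
  have oP: "\<one> \<in> P" using subgroup.one_closed[OF P] .
  have c1: "\<phi> \<one> \<in> carrier G" using img oP by blast
  have "\<phi> \<one> \<otimes> \<phi> \<one> = \<phi> (\<one> \<otimes> \<one>)" using hom oP by metis
  also have "\<one> \<otimes> \<one> = \<one>" by simp
  finally have "\<phi> \<one> \<otimes> \<phi> \<one> = \<phi> \<one>" .
  then show "\<phi> \<one> = \<one>" by (rule iffD1[OF l_cancel_one[OF c1 c1]])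
qed

lemma hom_inv:
  assumes P: "subgroup P G" and img: "\<phi> ` P \<subseteq> carrier G"
    and hom: "\<forall>x\<in>P. \<forall>y\<in>P. \<phi> (x \<otimes> y) = \<phi> x \<otimes> \<phi> y" and x: "x \<in> P"
  shows "\<phi> (inv x) = inv (\<phi> x)"
proof -
  have one: "\<phi> \<one> = \<one>" by (rule hom_one[OF P img hom])
  have PC: "P \<subseteq> carrier G" using subgroup.subset[OF P] .
  have ix: "inv x \<in> P" using subgroup.m_inv_closed[OF P x] .
  have xc: "x \<in> carrier G" using x PC by blast
  have c: "\<phi> x \<in> carrier G" "\<phi> (inv x) \<in> carrier G" using img x ix by auto
  have "\<phi> x \<otimes> \<phi> (inv x) = \<phi> (x \<otimes> inv x)" using hom x ix by metis
  also have "x \<otimes> inv x = \<one>" using xc by simp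
  finally have "\<phi> x \<otimes> \<phi> (inv x) = \<phi> \<one>" .
  then have "\<phi> x \<otimes> \<phi> (inv x) = \<one>" using one by (rule trans)
  then have "\<phi> (inv x) \<otimes> \<phi> x = \<one>" using inv_comm[OF _ c(1) c(2)] by simp
  then show ?thesis using inv_equality[OF _ c(1) c(2)] by simp
qed

lemma hom_img_subgroup:
  assumes P: "subgroup P G" and img: "\<phi> ` P \<subseteq> carrier G"
    and hom: "\<forall>x\<in>P. \<forall>y\<in>P. \<phi> (x \<otimes> y) = \<phi> x \<otimes> \<phi> y"
  shows "subgroup (\<phi> ` P) G"
proof (rule subgroupI)
  have oP: "\<one> \<in> P" using subgroup.one_closed[OF P] .
  show "\<phi> ` P \<subseteq> carrier G" by fact
  show "\<phi> ` P \<noteq> {}" using oP by blast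
  show "inv a \<in> \<phi> ` P" if a: "a \<in> \<phi> ` P" for a
  proof -
    obtain x where x: "x \<in> P" "a = \<phi> x" using a by blast
    have "inv a = \<phi> (inv x)" using hom_inv[OF P img hom x(1)] x(2) by simp
    then show ?thesis using subgroup.m_inv_closed[OF P x(1)] by simp
  qed
  show "a \<otimes> b \<in> \<phi> ` P" if a: "a \<in> \<phi> ` P" and b: "b \<in> \<phi> ` P" for a b
  proof -
    obtain x where x: "x \<in> P" "a = \<phi> x" using a by blast
    obtain y where y: "y \<in> P" "b = \<phi> y" using b by blast
    have "a \<otimes> b = \<phi> (x \<otimes> y)" using hom x y by simp
    then show ?thesis using subgroup.m_closed[OF P x(1) y(1)] by simp
  qed
qed

lemma conjm_one: "x \<in> carrier G \<Longrightarrow> conjm G \<one> x = x"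
  by (simp add: conjm_def)

lemma restrict_conjm_one: assumes "P \<subseteq> carrier G" shows "restrict (conjm G \<one>) P = restrict id P"
proof (rule ext)
  fix x show "restrict (conjm G \<one>) P x = restrict id P x"
    using assms by (cases "x \<in> P") (auto simp: conjm_def)
qed

lemma incl_HomS: "P \<subseteq> Q \<Longrightarrow> Q \<subseteq> carrier G \<Longrightarrow> restrict id P \<in> HomS G P Q"
proof -
  assume a: "P \<subseteq> Q" "Q \<subseteq> carrier G"
  have "conjm G \<one> ` P \<subseteq> Q" using a by (auto simp: conjm_def subset_iff)
  then have "restrict (conjm G \<one>) P \<in> HomS G P Q" unfolding HomS_def
    by (intro CollectI exI[of _ \<one>]) simp
  then show ?thesis using restrict_conjm_one a by auto
qed

lemma F_Inj:
  assumes "fusion_system G F" "subgroup P G" "subgroup Q G" "\<phi> \<in> F P Q"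
  shows "\<phi> \<in> InjHom G P Q"
  using fs_Inj[OF assms] .

lemma F_facts:
  assumes "fusion_system G F" "subgroup P G" "subgroup Q G" "\<phi> \<in> F P Q"
  shows "\<phi> \<in> extensional P" "\<phi> ` P \<subseteq> Q" "inj_on \<phi> P"
    "\<forall>x\<in>P. \<forall>y\<in>P. \<phi> (x \<otimes> y) = \<phi> x \<otimes> \<phi> y"
  using F_Inj[OF assms] unfolding InjHom_def by auto

lemma F_img_subgroup:
  assumes "fusion_system G F" "subgroup P G" "subgroup Q G" "\<phi> \<in> F P Q"
  shows "subgroup (\<phi> ` P) G"
proof -
  have "\<phi> ` P \<subseteq> carrier G" using F_facts(2)[OF assms] subgroup.subset[OF assms(3)] by (rule subset_trans)
  then show ?thesis by (rule hom_img_subgroup[OF assms(2) _ F_facts(4)[OF assms]])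
qed

lemma F_codom:
  assumes fs: "fusion_system G F" and P: "subgroup P G" and Q: "subgroup Q G" and R: "subgroup R G"
    and \<phi>: "\<phi> \<in> F P R" and sub: "\<phi> ` P \<subseteq> Q"
  shows "\<phi> \<in> F P Q"
proof -
  have I: "subgroup (\<phi> ` P) G" using F_img_subgroup[OF fs P R \<phi>] .
  have a: "\<phi> \<in> F P (\<phi> ` P)" using fs_img[OF fs P R \<phi>] .
  have "restrict id (\<phi> ` P) \<in> HomS G (\<phi> ` P) Q"
    using incl_HomS[OF sub subgroup.subset[OF Q]] .
  then have b: "restrict id (\<phi> ` P) \<in> F (\<phi> ` P) Q" using fs_HomS[OF fs I Q] by blast
  have "restrict (restrict id (\<phi> ` P) \<circ> \<phi>) P \<in> F P Q"
    using fs_comp[OF fs P I Q a b] .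
  moreover have "restrict (restrict id (\<phi> ` P) \<circ> \<phi>) P = \<phi>"
    using F_facts(1)[OF fs P R \<phi>] by (auto simp: restrict_def extensional_def fun_eq_iff)
  ultimately show ?thesis by simp
qed

lemma F_restr:
  assumes fs: "fusion_system G F" and P: "subgroup P G" and P': "subgroup P' G" and R: "subgroup R G"
    and sub: "P' \<subseteq> P" and \<phi>: "\<phi> \<in> F P R"
  shows "restrict \<phi> P' \<in> F P' R"
proof -
  have "restrict id P' \<in> HomS G P' P" using incl_HomS[OF sub subgroup.subset[OF P]] .
  then have b: "restrict id P' \<in> F P' P" using fs_HomS[OF fs P' P] by blast
  have "restrict (\<phi> \<circ> restrict id P') P' \<in> F P' R"
    using fs_comp[OF fs P' P R b \<phi>] .
  moreover have "restrict (\<phi> \<circ> restrict id P') P' = restrict \<phi> P'"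
    by (auto simp: restrict_def fun_eq_iff)
  ultimately show ?thesis by simp
qed

lemma F_conjI:
  assumes fs: "fusion_system G F" and P: "subgroup P G" and Q: "subgroup Q G" and \<phi>: "\<phi> \<in> F P Q"
  shows "F_conj G F P (\<phi> ` P)"
proof -
  have I: "subgroup (\<phi> ` P) G" using F_img_subgroup[OF fs P Q \<phi>] .
  have a: "\<phi> \<in> F P (\<phi> ` P) \<and> restrict (inv_into P \<phi>) (\<phi> ` P) \<in> F (\<phi> ` P) P"
    using fs_img[OF fs P Q \<phi>] fs_inv[OF fs P Q \<phi>] by blast
  have "\<exists>\<psi>\<in>F P (\<phi> ` P). \<psi> ` P = \<phi> ` P \<and> restrict (inv_into P \<psi>) (\<phi> ` P) \<in> F (\<phi> ` P) P"
    using a by (intro bexI[of _ \<phi>]) auto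
  then show ?thesis unfolding F_conj_def using P I by (intro conjI)
qed

lemma F_conj_trans:
  assumes fs: "fusion_system G F" and "F_conj G F P P1" "F_conj G F P1 P2"
  shows "F_conj G F P P2"
proof -
  obtain \<phi> where P: "subgroup P G" and P1: "subgroup P1 G" and \<phi>: "\<phi> \<in> F P P1" "\<phi> ` P = P1"
    using assms(2) unfolding F_conj_def by blast
  obtain \<psi> where P2: "subgroup P2 G" and \<psi>: "\<psi> \<in> F P1 P2" "\<psi> ` P1 = P2"
    using assms(3) unfolding F_conj_def by blast
  have c: "restrict (\<psi> \<circ> \<phi>) P \<in> F P P2" using fs_comp[OF fs P P1 P2 \<phi>(1) \<psi>(1)] .
  have "restrict (\<psi> \<circ> \<phi>) P ` P = (\<psi> \<circ> \<phi>) ` P" by simp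
  also have "\<dots> = \<psi> ` (\<phi> ` P)" by (simp add: image_comp)
  also have "\<dots> = P2" using \<phi> \<psi> by simp
  finally have "restrict (\<psi> \<circ> \<phi>) P ` P = P2" .
  then show ?thesis using F_conjI[OF fs P P2 c] by simp
qed

lemma F_conj_refl:
  assumes fs: "fusion_system G F" and P: "subgroup P G"
  shows "F_conj G F P P"
proof -
  have "restrict id P \<in> F P P" using fs_HomS[OF fs P P incl_HomS[OF subset_refl subgroup.subset[OF P]]] .
  moreover have "restrict id P ` P = P" by auto
  ultimately show ?thesis using F_conjI[OF fs P P] by metis
qed

lemma exists_fully_centralized:
  assumes fs: "fusion_system G F" and fin: "finite (carrier G)" and P: "subgroup P G"
  shows "\<exists>P''. F_conj G F P P'' \<and> fully_centralized G F P''"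
proof -
  let ?C = "{P'. F_conj G F P P'}"
  let ?f = "\<lambda>P'. card (centralizerS G P')"
  have "?C \<subseteq> Pow (carrier G)"
  proof
    fix P' assume "P' \<in> ?C"
    then have "subgroup P' G" unfolding F_conj_def by simp
    then show "P' \<in> Pow (carrier G)" using subgroup.subset[of P' G] by simp
  qed
  then have fC: "finite ?C" by (rule finite_subset) (simp add: fin)
  have ne: "P \<in> ?C" using F_conj_refl[OF fs P] by simp
  let ?m = "Max (?f ` ?C)"
  have "?m \<in> ?f ` ?C" using fC ne by (intro Max_in) auto
  then obtain P'' where P'': "P'' \<in> ?C" "?f P'' = ?m" by auto
  have "fully_centralized G F P''"
    unfolding fully_centralized_def
  proof (intro allI impI)
    fix P' assume "F_conj G F P'' P'"
    then have "P' \<in> ?C" using F_conj_trans[OF fs] P'' by blast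
    then show "?f P' \<le> ?f P''" using P'' fC by simp
  qed
  then show ?thesis using P'' by blast
qed

lemma mem_setmult: "h \<in> H \<Longrightarrow> k \<in> K \<Longrightarrow> h \<otimes> k \<in> H <#> K"
  unfolding set_mult_def by blast

lemma prod_subgroup:
  assumes P: "subgroup P G" and V: "subgroup V G" and Z: "V \<subseteq> centerS G (carrier G)"
  shows "subgroup (P <#> V) G" "P \<subseteq> P <#> V" "V \<subseteq> P <#> V"
proof -
  have PC: "P \<subseteq> carrier G" and VC: "V \<subseteq> carrier G" using subgroup.subset[OF P] subgroup.subset[OF V] by auto
  have cm: "v \<otimes> x = x \<otimes> v" if "v \<in> V" "x \<in> carrier G" for v x
    using Z that unfolding centerS_def by blast
  show "P \<subseteq> P <#> V"
  proof
    fix x assume "x \<in> P"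
    then have "x \<otimes> \<one> \<in> P <#> V" using mem_setmult[OF _ subgroup.one_closed[OF V]] by blast
    then show "x \<in> P <#> V" using \<open>x \<in> P\<close> PC by auto
  qed
  show "V \<subseteq> P <#> V"
  proof
    fix x assume "x \<in> V"
    then have "\<one> \<otimes> x \<in> P <#> V" using mem_setmult[OF subgroup.one_closed[OF P]] by blast
    then show "x \<in> P <#> V" using \<open>x \<in> V\<close> VC by auto
  qed
  show "subgroup (P <#> V) G"
  proof (rule subgroupI)
    show "P <#> V \<subseteq> carrier G" using PC VC unfolding set_mult_def by auto
    show "P <#> V \<noteq> {}" using \<open>P \<subseteq> P <#> V\<close> subgroup.one_closed[OF P] by blast
    show "inv a \<in> P <#> V" if aa: "a \<in> P <#> V" for a
    proof -
      obtain x v where xv: "x \<in> P" "v \<in> V" "a = x \<otimes> v" using aa unfolding set_mult_def by blast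
      have xc: "x \<in> carrier G" "v \<in> carrier G" using xv PC VC by auto
      have iv: "inv v \<in> V" "inv x \<in> P" using xv subgroup.m_inv_closed[OF V] subgroup.m_inv_closed[OF P] by auto
      have "inv a = inv v \<otimes> inv x" using xv(3) inv_mult_group[OF xc] by simp
      also have "\<dots> = inv x \<otimes> inv v" using cm[OF iv(1)] xc by simp
      finally show ?thesis using mem_setmult[OF iv(2) iv(1)] by simp
    qed
    show "a \<otimes> b \<in> P <#> V" if aa: "a \<in> P <#> V" and bb: "b \<in> P <#> V" for a b
    proof -
      obtain x v where xv: "x \<in> P" "v \<in> V" "a = x \<otimes> v" using aa unfolding set_mult_def by blast
      obtain y w where yw: "y \<in> P" "w \<in> V" "b = y \<otimes> w" using bb unfolding set_mult_def by blast
      have c: "x \<in> carrier G" "v \<in> carrier G" "y \<in> carrier G" "w \<in> carrier G" using xv yw PC VC by auto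
      have "a \<otimes> b = x \<otimes> (v \<otimes> y) \<otimes> w" using xv(3) yw(3) c by (simp add: m_assoc)
      also have "\<dots> = x \<otimes> (y \<otimes> v) \<otimes> w" using cm[OF xv(2) c(3)] by simp
      also have "\<dots> = (x \<otimes> y) \<otimes> (v \<otimes> w)" using c by (simp add: m_assoc)
      finally show ?thesis using mem_setmult[OF subgroup.m_closed[OF P xv(1) yw(1)] subgroup.m_closed[OF V xv(2) yw(2)]] by simp
    qed
  qed
qed

end


context group begin

lemma conj_coset: assumes "P \<subseteq> carrier G" "g \<in> carrier G"
  shows "g <# P #> inv g = (\<lambda>x. g \<otimes> x \<otimes> inv g) ` P"
  unfolding l_coset_def r_coset_def by auto

lemma normalizer_iff: assumes "P \<subseteq> carrier G"
  shows "g \<in> normalizer G P \<longleftrightarrow> g \<in> carrier G \<and> (\<lambda>x. g \<otimes> x \<otimes> inv g) ` P = P"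
proof -
  have "g \<in> normalizer G P \<longleftrightarrow> g \<in> carrier G \<and> g <# P #> inv g = P"
    unfolding normalizer_def stabilizer_def using assms by auto
  then show ?thesis using conj_coset[OF assms] by auto
qed

lemma normalizer_conj: assumes "subgroup P G" "g \<in> normalizer G P" "x \<in> P"
  shows "g \<otimes> x \<otimes> inv g \<in> P"
proof -
  have "(\<lambda>x. g \<otimes> x \<otimes> inv g) ` P = P" using normalizer_iff[OF subgroup.subset[OF assms(1)]] assms(2) by simp
  then show ?thesis using assms(3) by blast
qed

lemma subgroup_sub_normalizer: assumes P: "subgroup P G" and g: "g \<in> P"
  shows "g \<in> normalizer G P"
proof -
  have PC: "P \<subseteq> carrier G" by (rule subgroup.subset[OF P])
  have gc: "g \<in> carrier G" using g PC by blast
  have "(\<lambda>x. g \<otimes> x \<otimes> inv g) ` P = P"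
  proof
    show "(\<lambda>x. g \<otimes> x \<otimes> inv g) ` P \<subseteq> P"
    proof
      fix y assume "y \<in> (\<lambda>x. g \<otimes> x \<otimes> inv g) ` P"
      then obtain x where x: "x \<in> P" "y = g \<otimes> x \<otimes> inv g" by blast
      have "g \<otimes> x \<in> P" by (rule subgroup.m_closed[OF P g x(1)])
      then show "y \<in> P" using x(2) subgroup.m_closed[OF P _ subgroup.m_inv_closed[OF P g]] by simp
    qed
    show "P \<subseteq> (\<lambda>x. g \<otimes> x \<otimes> inv g) ` P"
    proof
      fix y assume y: "y \<in> P"
      have yc: "y \<in> carrier G" using y PC by blast
      have m: "inv g \<otimes> y \<otimes> g \<in> P"
        using subgroup.m_closed[OF P subgroup.m_closed[OF P subgroup.m_inv_closed[OF P g] y] g] .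
      have "g \<otimes> (inv g \<otimes> y \<otimes> g) \<otimes> inv g = y" using gc yc by (simp add: m_assoc, simp add: m_assoc[symmetric])
      then show "y \<in> (\<lambda>x. g \<otimes> x \<otimes> inv g) ` P" using m by (metis image_eqI)
    qed
  qed
  then show ?thesis using normalizer_iff[OF PC] gc by simp
qed

lemma central_in_normalizer: assumes P: "subgroup P G" and v: "v \<in> centerS G (carrier G)"
  shows "v \<in> normalizer G P"
proof -
  have PC: "P \<subseteq> carrier G" by (rule subgroup.subset[OF P])
  have vc: "v \<in> carrier G" and cm: "\<And>x. x \<in> carrier G \<Longrightarrow> v \<otimes> x = x \<otimes> v"
    using v unfolding centerS_def by auto
  have "\<And>x. x \<in> P \<Longrightarrow> v \<otimes> x \<otimes> inv v = x"
  proof -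
    fix x assume "x \<in> P"
    then have xc: "x \<in> carrier G" using PC by blast
    have "v \<otimes> x \<otimes> inv v = x \<otimes> v \<otimes> inv v" using cm[OF xc] by simp
    also have "\<dots> = x" using xc vc by (simp add: m_assoc)
    finally show "v \<otimes> x \<otimes> inv v = x" .
  qed
  then have "(\<lambda>x. v \<otimes> x \<otimes> inv v) ` P = P" by simp
  then show ?thesis using normalizer_iff[OF PC] vc by simp
qed


lemma N_phi_iff:
  assumes P: "subgroup P G" and inj: "inj_on \<phi> P"
  shows "g \<in> N_phi G F P \<phi> \<longleftrightarrow> g \<in> normalizer G P \<and>
     (\<exists>h\<in>carrier G. \<forall>x\<in>P. \<phi> (g \<otimes> x \<otimes> inv g) = h \<otimes> \<phi> x \<otimes> inv h)"
proof -
  have pt: "restrict (\<phi> \<circ> conjm G g \<circ> inv_into P \<phi>) (\<phi> ` P) (\<phi> x) = \<phi> (g \<otimes> x \<otimes> inv g)"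
    if x: "x \<in> P" for x
    using x inv_into_f_f[OF inj x] by (simp add: conjm_def)
  show ?thesis
  proof
    assume a: "g \<in> N_phi G F P \<phi>"
    then have gn: "g \<in> normalizer G P" unfolding N_phi_def by simp
    from a obtain h where h: "h \<in> carrier G"
      "restrict (\<phi> \<circ> conjm G g \<circ> inv_into P \<phi>) (\<phi> ` P) = restrict (conjm G h) (\<phi> ` P)"
      unfolding N_phi_def HomS_def by auto
    have "\<forall>x\<in>P. \<phi> (g \<otimes> x \<otimes> inv g) = h \<otimes> \<phi> x \<otimes> inv h"
    proof
      fix x assume x: "x \<in> P"
      have "\<phi> (g \<otimes> x \<otimes> inv g) = restrict (\<phi> \<circ> conjm G g \<circ> inv_into P \<phi>) (\<phi> ` P) (\<phi> x)"
        using pt[OF x] by simp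
      also have "\<dots> = restrict (conjm G h) (\<phi> ` P) (\<phi> x)" using h(2) by simp
      also have "\<dots> = h \<otimes> \<phi> x \<otimes> inv h" using x by (simp add: conjm_def)
      finally show "\<phi> (g \<otimes> x \<otimes> inv g) = h \<otimes> \<phi> x \<otimes> inv h" .
    qed
    then show "g \<in> normalizer G P \<and> (\<exists>h\<in>carrier G. \<forall>x\<in>P. \<phi> (g \<otimes> x \<otimes> inv g) = h \<otimes> \<phi> x \<otimes> inv h)"
      using gn h(1) by blast
  next
    assume a: "g \<in> normalizer G P \<and> (\<exists>h\<in>carrier G. \<forall>x\<in>P. \<phi> (g \<otimes> x \<otimes> inv g) = h \<otimes> \<phi> x \<otimes> inv h)"
    then have gn: "g \<in> normalizer G P" by simp
    from a obtain h where h: "h \<in> carrier G" "\<And>x. x \<in> P \<Longrightarrow> \<phi> (g \<otimes> x \<otimes> inv g) = h \<otimes> \<phi> x \<otimes> inv h"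
      by blast
    have eq: "restrict (\<phi> \<circ> conjm G g \<circ> inv_into P \<phi>) (\<phi> ` P) = restrict (conjm G h) (\<phi> ` P)"
    proof
      fix y show "restrict (\<phi> \<circ> conjm G g \<circ> inv_into P \<phi>) (\<phi> ` P) y = restrict (conjm G h) (\<phi> ` P) y"
      proof (cases "y \<in> \<phi> ` P")
        case True
        then obtain x where x: "x \<in> P" "y = \<phi> x" by blast
        have "restrict (\<phi> \<circ> conjm G g \<circ> inv_into P \<phi>) (\<phi> ` P) y = \<phi> (g \<otimes> x \<otimes> inv g)"
          using pt[OF x(1)] x(2) by simp
        also have "\<dots> = h \<otimes> \<phi> x \<otimes> inv h" using h(2)[OF x(1)] .
        also have "\<dots> = restrict (conjm G h) (\<phi> ` P) y" using x by (simp add: conjm_def)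
        finally show ?thesis .
      next
        case False
        then show ?thesis by simp
      qed
    qed
    have sub: "conjm G h ` (\<phi> ` P) \<subseteq> \<phi> ` P"
    proof
      fix z assume "z \<in> conjm G h ` (\<phi> ` P)"
      then obtain x where x: "x \<in> P" "z = h \<otimes> \<phi> x \<otimes> inv h" by (auto simp: conjm_def)
      then have "z = \<phi> (g \<otimes> x \<otimes> inv g)" using h(2)[OF x(1)] by simp
      then show "z \<in> \<phi> ` P" using normalizer_conj[OF P gn x(1)] by blast
    qed
    have "restrict (\<phi> \<circ> conjm G g \<circ> inv_into P \<phi>) (\<phi> ` P) \<in> HomS G (\<phi> ` P) (\<phi> ` P)"
      unfolding HomS_def using eq sub h(1) by blast
    then show "g \<in> N_phi G F P \<phi>" unfolding N_phi_def using gn by simp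
  qed
qed

lemma N_phi_I:
  assumes P: "subgroup P G" and inj: "inj_on \<phi> P" and gn: "g \<in> normalizer G P" and h: "h \<in> carrier G"
    and eq: "\<And>x. x \<in> P \<Longrightarrow> \<phi> (g \<otimes> x \<otimes> inv g) = h \<otimes> \<phi> x \<otimes> inv h"
  shows "g \<in> N_phi G F P \<phi>"
proof -
  have "\<exists>h\<in>carrier G. \<forall>x\<in>P. \<phi> (g \<otimes> x \<otimes> inv g) = h \<otimes> \<phi> x \<otimes> inv h"
    using h eq by blast
  then show ?thesis using N_phi_iff[OF P inj, where F=F and g=g] gn by simp
qed

lemma N_phi_E:
  assumes P: "subgroup P G" and inj: "inj_on \<phi> P" and g: "g \<in> N_phi G F P \<phi>"
  obtains h where "g \<in> normalizer G P" "h \<in> carrier G"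
    "\<And>x. x \<in> P \<Longrightarrow> \<phi> (g \<otimes> x \<otimes> inv g) = h \<otimes> \<phi> x \<otimes> inv h"
proof -
  have c: "g \<in> normalizer G P \<and> (\<exists>h\<in>carrier G. \<forall>x\<in>P. \<phi> (g \<otimes> x \<otimes> inv g) = h \<otimes> \<phi> x \<otimes> inv h)"
    using N_phi_iff[OF P inj, where F=F and g=g] g by simp
  then have gn: "g \<in> normalizer G P" by (rule conjunct1)
  from c have "\<exists>h\<in>carrier G. \<forall>x\<in>P. \<phi> (g \<otimes> x \<otimes> inv g) = h \<otimes> \<phi> x \<otimes> inv h" by (rule conjunct2)
  then obtain h where h: "h \<in> carrier G" "\<forall>x\<in>P. \<phi> (g \<otimes> x \<otimes> inv g) = h \<otimes> \<phi> x \<otimes> inv h" by (rule bexE)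
  show ?thesis by (rule that[OF gn h(1)]) (use h(2) in simp)
qed

lemma N_phi_subgroup:
  assumes P: "subgroup P G" and inj: "inj_on \<phi> P" and img: "\<phi> ` P \<subseteq> carrier G"
    and hom: "\<forall>x\<in>P. \<forall>y\<in>P. \<phi> (x \<otimes> y) = \<phi> x \<otimes> \<phi> y"
  shows "subgroup (N_phi G F P \<phi>) G"
proof -
  have PC: "P \<subseteq> carrier G" by (rule subgroup.subset[OF P])
  have NS: "subgroup (normalizer G P) G" by (rule normalizer_imp_subgroup[OF PC])
  have NC: "normalizer G P \<subseteq> carrier G" by (rule subgroup.subset[OF NS])
  note iff = N_phi_iff[OF P inj]
  show ?thesis
  proof (rule subgroupI)
    show "N_phi G F P \<phi> \<subseteq> carrier G"
    proof
      fix g assume "g \<in> N_phi G F P \<phi>"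
      then have "g \<in> normalizer G P" unfolding N_phi_def by simp
      then show "g \<in> carrier G" using NC by blast
    qed
    have n1: "\<one> \<in> normalizer G P" by (rule subgroup.one_closed[OF NS])
    have e1: "\<forall>x\<in>P. \<phi> (\<one> \<otimes> x \<otimes> inv \<one>) = \<one> \<otimes> \<phi> x \<otimes> inv \<one>"
    proof
      fix x assume x: "x \<in> P"
      then have "x \<in> carrier G" "\<phi> x \<in> carrier G" using PC img by auto
      then show "\<phi> (\<one> \<otimes> x \<otimes> inv \<one>) = \<one> \<otimes> \<phi> x \<otimes> inv \<one>" by simp
    qed
    have "\<one> \<in> N_phi G F P \<phi>" by (rule N_phi_I[OF P inj n1 one_closed]) (use e1 in blast)
    then show "N_phi G F P \<phi> \<noteq> {}" by blast
  next
    fix g assume "g \<in> N_phi G F P \<phi>"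
    obtain h where gn: "g \<in> normalizer G P" and h: "h \<in> carrier G" "\<And>x. x \<in> P \<Longrightarrow> \<phi> (g \<otimes> x \<otimes> inv g) = h \<otimes> \<phi> x \<otimes> inv h"
      using N_phi_E[OF P inj \<open>g \<in> N_phi G F P \<phi>\<close>] by blast
    have gc: "g \<in> carrier G" using gn NC by blast
    have ign: "inv g \<in> normalizer G P" by (rule subgroup.m_inv_closed[OF NS gn])
    have "\<phi> (inv g \<otimes> x \<otimes> inv (inv g)) = inv h \<otimes> \<phi> x \<otimes> inv (inv h)" if x: "x \<in> P" for x
    proof -
      have xc: "x \<in> carrier G" using x PC by blast
      let ?x' = "inv g \<otimes> x \<otimes> inv (inv g)"
      have x': "?x' \<in> P" by (rule normalizer_conj[OF P ign x])
      have x'c: "?x' \<in> carrier G" using x' PC by blast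
      have c: "\<phi> ?x' \<in> carrier G" "\<phi> x \<in> carrier G" using img x x' by auto
      have "g \<otimes> ?x' \<otimes> inv g = x" using gc xc by (simp add: m_assoc, simp add: m_assoc[symmetric])
      then have "\<phi> x = h \<otimes> \<phi> ?x' \<otimes> inv h" using h(2)[OF x'] by simp
      then have "inv h \<otimes> \<phi> x \<otimes> inv (inv h) = inv h \<otimes> (h \<otimes> \<phi> ?x' \<otimes> inv h) \<otimes> h" using h(1) by simp
      also have "\<dots> = \<phi> ?x'" using h(1) c by (simp add: m_assoc, simp add: m_assoc[symmetric])
      finally show ?thesis by simp
    qed
    then show "inv g \<in> N_phi G F P \<phi>" by (rule N_phi_I[OF P inj ign inv_closed[OF h(1)]])
  next
    fix g1 g2 assume g1: "g1 \<in> N_phi G F P \<phi>" and g2: "g2 \<in> N_phi G F P \<phi>"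
    obtain h1 where gn1: "g1 \<in> normalizer G P" and h1: "h1 \<in> carrier G" "\<And>x. x \<in> P \<Longrightarrow> \<phi> (g1 \<otimes> x \<otimes> inv g1) = h1 \<otimes> \<phi> x \<otimes> inv h1"
      using N_phi_E[OF P inj g1] by blast
    obtain h2 where gn2: "g2 \<in> normalizer G P" and h2: "h2 \<in> carrier G" "\<And>x. x \<in> P \<Longrightarrow> \<phi> (g2 \<otimes> x \<otimes> inv g2) = h2 \<otimes> \<phi> x \<otimes> inv h2"
      using N_phi_E[OF P inj g2] by blast
    have gc1: "g1 \<in> carrier G" using gn1 NC by blast
    have gc2: "g2 \<in> carrier G" using gn2 NC by blast
    have eqs: "\<phi> (g1 \<otimes> g2 \<otimes> x \<otimes> inv (g1 \<otimes> g2)) = (h1 \<otimes> h2) \<otimes> \<phi> x \<otimes> inv (h1 \<otimes> h2)" if x: "x \<in> P" for x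
    proof -
      have xc: "x \<in> carrier G" using x PC by blast
      have x2: "g2 \<otimes> x \<otimes> inv g2 \<in> P" by (rule normalizer_conj[OF P gn2 x])
      have c: "\<phi> x \<in> carrier G" using img x by auto
      have "g1 \<otimes> g2 \<otimes> x \<otimes> inv (g1 \<otimes> g2) = g1 \<otimes> (g2 \<otimes> x \<otimes> inv g2) \<otimes> inv g1"
        using gc1 gc2 xc by (simp add: inv_mult_group m_assoc)
      then have "\<phi> (g1 \<otimes> g2 \<otimes> x \<otimes> inv (g1 \<otimes> g2)) = h1 \<otimes> \<phi> (g2 \<otimes> x \<otimes> inv g2) \<otimes> inv h1"
        using h1(2)[OF x2] by simp
      also have "\<dots> = h1 \<otimes> (h2 \<otimes> \<phi> x \<otimes> inv h2) \<otimes> inv h1" using h2(2)[OF x] by simp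
      also have "\<dots> = (h1 \<otimes> h2) \<otimes> \<phi> x \<otimes> inv (h1 \<otimes> h2)"
        using h1(1) h2(1) c by (simp add: inv_mult_group m_assoc)
      finally show ?thesis .
    qed
    have n12: "g1 \<otimes> g2 \<in> normalizer G P" by (rule subgroup.m_closed[OF NS gn1 gn2])
    show "g1 \<otimes> g2 \<in> N_phi G F P \<phi>" by (rule N_phi_I[OF P inj n12 m_closed[OF h1(1) h2(1)] eqs])
  qed
qed

end


lemma sat_fs: "saturated_fusion_system p S F \<Longrightarrow> fusion_system S F"
  unfolding saturated_fusion_system_def by simp
lemma sat_grp: "saturated_fusion_system p S F \<Longrightarrow> group S"
  unfolding saturated_fusion_system_def finite_p_group_def by simp
lemma sat_fin: "saturated_fusion_system p S F \<Longrightarrow> finite (carrier S)"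
  unfolding saturated_fusion_system_def finite_p_group_def by simp
lemma sat_prime: "saturated_fusion_system p S F \<Longrightarrow> prime p"
  unfolding saturated_fusion_system_def finite_p_group_def by simp
lemma sat_I: "saturated_fusion_system p S F \<Longrightarrow> subgroup P S \<Longrightarrow> fully_normalized S F P \<Longrightarrow>
   sylow_subset p (HomS S P P) (F P P)"
  unfolding saturated_fusion_system_def by blast
lemma sat_II: "saturated_fusion_system p S F \<Longrightarrow> subgroup P S \<Longrightarrow> \<phi> \<in> F P (carrier S) \<Longrightarrow>
   fully_centralized S F (\<phi> ` P) \<Longrightarrow> \<exists>\<psi> \<in> F (N_phi S F P \<phi>) (carrier S). \<forall>x\<in>P. \<psi> x = \<phi> x"
  unfolding saturated_fusion_system_def by blast
lemma cls_proj: "centric_linking_system S F L \<Longrightarrow> F_centric S F P \<Longrightarrow> F_centric S F Q \<Longrightarrow>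
   f \<in> Mor L P Q \<Longrightarrow> proj L P Q f \<in> F P Q"
  unfolding centric_linking_system_def Let_def by blast


context group begin

lemma HomS_central:
  assumes V: "subgroup V G" and Z: "V \<subseteq> centerS G (carrier G)"
  shows "HomS G V V = {restrict id V}"
proof
  have VC: "V \<subseteq> carrier G" by (rule subgroup.subset[OF V])
  show "{restrict id V} \<subseteq> HomS G V V" using incl_HomS[OF subset_refl VC] by simp
  show "HomS G V V \<subseteq> {restrict id V}"
  proof
    fix f assume "f \<in> HomS G V V"
    then obtain g where g: "g \<in> carrier G" "f = restrict (conjm G g) V" unfolding HomS_def by blast
    have "restrict (conjm G g) V = restrict id V"
    proof
      fix x show "restrict (conjm G g) V x = restrict id V x"
      proof (cases "x \<in> V")
        case True
        then have xc: "x \<in> carrier G" and cm: "x \<otimes> g = g \<otimes> x" using Z g(1) unfolding centerS_def by auto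
        have "conjm G g x = g \<otimes> x \<otimes> inv g" by (simp add: conjm_def)
        also have "\<dots> = x \<otimes> g \<otimes> inv g" using cm by simp
        also have "\<dots> = x" using xc g(1) by (simp add: m_assoc)
        finally show ?thesis using True by simp
      qed simp
    qed
    then show "f \<in> {restrict id V}" using g(2) by simp
  qed
qed

lemma FVV:
  assumes sat: "saturated_fusion_system p G F" and V: "subgroup V G" and Z: "V \<subseteq> centerS G (carrier G)"
    and wc: "F_weakly_closed G F V" and pg: "\<exists>n. card (F V V) = p ^ n"
  shows "F V V = {restrict id V}"
proof -
  have fn: "fully_normalized G F V" unfolding fully_normalized_def
  proof (intro allI impI)
    fix V' assume "F_conj G F V V'"
    then have "V' = V" using wc unfolding F_weakly_closed_def by blast
    then show "card (normalizer G V') \<le> card (normalizer G V)" by simp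
  qed
  have syl: "sylow_subset p (HomS G V V) (F V V)" by (rule sat_I[OF sat V fn])
  have nd: "\<not> p dvd (card (F V V) div card (HomS G V V))" using syl unfolding sylow_subset_def by blast
  have c1: "card (HomS G V V) = 1" using HomS_central[OF V Z] by simp
  obtain n where n: "card (F V V) = p ^ n" using pg by blast
  have pr: "prime p" by (rule sat_prime[OF sat])
  have "n = 0"
  proof (rule ccontr)
    assume "n \<noteq> 0"
    then have "p dvd p ^ n" by (simp add: dvd_power)
    then show False using nd n c1 by simp
  qed
  then have cF: "card (F V V) = 1" using n by simp
  have "restrict id V \<in> F V V"
    using fs_HomS[OF sat_fs[OF sat] V V] HomS_central[OF V Z] by blast
  then show ?thesis using cF by (metis card_1_singletonE singletonD)
qed

lemma fixV:
  assumes fs: "fusion_system G F" and V: "subgroup V G" and wc: "F_weakly_closed G F V"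
    and idV: "F V V = {restrict id V}"
    and R: "subgroup R G" and VR: "V \<subseteq> R" and \<psi>: "\<psi> \<in> F R (carrier G)" and v: "v \<in> V"
  shows "\<psi> v = v"
proof -
  have CS: "subgroup (carrier G) G" by (rule subgroup_self)
  have \<chi>: "restrict \<psi> V \<in> F V (carrier G)" by (rule F_restr[OF fs R V CS VR \<psi>])
  have "F_conj G F V (restrict \<psi> V ` V)" by (rule F_conjI[OF fs V CS \<chi>])
  then have im: "restrict \<psi> V ` V = V" using wc unfolding F_weakly_closed_def by blast
  have "restrict \<psi> V \<in> F V V" by (rule F_codom[OF fs V V CS \<chi>]) (use im in simp)
  then have "restrict \<psi> V = restrict id V" using idV by simp
  then have "restrict \<psi> V v = restrict id V v" by simp
  then show ?thesis using v by simp
qed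

end


context group begin

lemma EXT:
  assumes sat: "saturated_fusion_system p G F" and V: "subgroup V G" and Z: "V \<subseteq> centerS G (carrier G)"
    and wc: "F_weakly_closed G F V" and idV: "F V V = {restrict id V}"
    and P: "subgroup P G" and R: "subgroup R G" and \<chi>: "\<chi> \<in> F P R"
    and fc: "fully_centralized G F (\<chi> ` P)"
  shows "\<exists>\<psi> \<in> F (P <#> V) (\<chi> ` P <#> V). (\<forall>x\<in>P. \<psi> x = \<chi> x) \<and> (\<forall>v\<in>V. \<psi> v = v)"
proof -
  have fs: "fusion_system G F" by (rule sat_fs[OF sat])
  have CS: "subgroup (carrier G) G" by (rule subgroup_self)
  have PC: "P \<subseteq> carrier G" by (rule subgroup.subset[OF P])
  have VC: "V \<subseteq> carrier G" by (rule subgroup.subset[OF V])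
  have RC: "R \<subseteq> carrier G" by (rule subgroup.subset[OF R])
  have \<chi>C: "\<chi> \<in> F P (carrier G)"
    by (rule F_codom[OF fs P CS R \<chi>]) (use F_facts(2)[OF fs P R \<chi>] RC in blast)
  obtain \<psi>0 where \<psi>0: "\<psi>0 \<in> F (N_phi G F P \<chi>) (carrier G)" and \<psi>0P: "\<And>x. x \<in> P \<Longrightarrow> \<psi>0 x = \<chi> x"
    using sat_II[OF sat P \<chi>C fc] by blast
  have inj: "inj_on \<chi> P" by (rule F_facts(3)[OF fs P CS \<chi>C])
  have img: "\<chi> ` P \<subseteq> carrier G" by (rule F_facts(2)[OF fs P CS \<chi>C])
  have hom: "\<forall>x\<in>P. \<forall>y\<in>P. \<chi> (x \<otimes> y) = \<chi> x \<otimes> \<chi> y" by (rule F_facts(4)[OF fs P CS \<chi>C])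
  let ?N = "N_phi G F P \<chi>"
  have NS: "subgroup ?N G" by (rule N_phi_subgroup[OF P inj img hom])
  have PN: "P \<subseteq> ?N"
  proof
    fix g assume g: "g \<in> P"
    have gn: "g \<in> normalizer G P" by (rule subgroup_sub_normalizer[OF P g])
    have hc: "\<chi> g \<in> carrier G" using img g by blast
    show "g \<in> ?N"
    proof (rule N_phi_I[OF P inj gn hc])
      fix x assume x: "x \<in> P"
      have ig: "inv g \<in> P" by (rule subgroup.m_inv_closed[OF P g])
      have gx: "g \<otimes> x \<in> P" by (rule subgroup.m_closed[OF P g x])
      have "\<chi> (g \<otimes> x \<otimes> inv g) = \<chi> (g \<otimes> x) \<otimes> \<chi> (inv g)" using hom gx ig by blast
      also have "\<dots> = \<chi> g \<otimes> \<chi> x \<otimes> \<chi> (inv g)" using hom g x by simp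
      also have "\<chi> (inv g) = inv (\<chi> g)" by (rule hom_inv[OF P img hom g])
      finally show "\<chi> (g \<otimes> x \<otimes> inv g) = \<chi> g \<otimes> \<chi> x \<otimes> inv (\<chi> g)" .
    qed
  qed
  have VN: "V \<subseteq> ?N"
  proof
    fix v assume v: "v \<in> V"
    have vz: "v \<in> centerS G (carrier G)" using v Z by blast
    have gn: "v \<in> normalizer G P" by (rule central_in_normalizer[OF P vz])
    have vc: "v \<in> carrier G" using v VC by blast
    show "v \<in> ?N"
    proof (rule N_phi_I[OF P inj gn one_closed])
      fix x assume x: "x \<in> P"
      have xc: "x \<in> carrier G" using x PC by blast
      have cm: "v \<otimes> x = x \<otimes> v" using vz xc unfolding centerS_def by blast
      have "v \<otimes> x \<otimes> inv v = x \<otimes> v \<otimes> inv v" using cm by simp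
      also have "\<dots> = x" using xc vc by (simp add: m_assoc)
      finally have e: "v \<otimes> x \<otimes> inv v = x" .
      have "\<chi> x \<in> carrier G" using img x by blast
      then show "\<chi> (v \<otimes> x \<otimes> inv v) = \<one> \<otimes> \<chi> x \<otimes> inv \<one>" using e by simp
    qed
  qed
  have PVS: "subgroup (P <#> V) G" by (rule prod_subgroup(1)[OF P V Z])
  have PVN: "P <#> V \<subseteq> ?N"
  proof
    fix y assume "y \<in> P <#> V"
    then obtain x v where xv: "x \<in> P" "v \<in> V" "y = x \<otimes> v" unfolding set_mult_def by blast
    have "x \<otimes> v \<in> ?N" using PN VN xv subgroup.m_closed[OF NS] by blast
    then show "y \<in> ?N" using xv(3) by simp
  qed
  have fixv: "\<And>v. v \<in> V \<Longrightarrow> \<psi>0 v = v" by (rule fixV[OF fs V wc idV NS VN \<psi>0])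
  have homN: "\<forall>x\<in>?N. \<forall>y\<in>?N. \<psi>0 (x \<otimes> y) = \<psi>0 x \<otimes> \<psi>0 y" by (rule F_facts(4)[OF fs NS CS \<psi>0])
  have \<psi>1: "restrict \<psi>0 (P <#> V) \<in> F (P <#> V) (carrier G)" by (rule F_restr[OF fs NS PVS CS PVN \<psi>0])
  have IS: "subgroup (\<chi> ` P) G" by (rule F_img_subgroup[OF fs P R \<chi>])
  have IVS: "subgroup (\<chi> ` P <#> V) G" by (rule prod_subgroup(1)[OF IS V Z])
  have im: "restrict \<psi>0 (P <#> V) ` (P <#> V) \<subseteq> \<chi> ` P <#> V"
  proof
    fix z assume "z \<in> restrict \<psi>0 (P <#> V) ` (P <#> V)"
    then obtain y where y: "y \<in> P <#> V" "z = \<psi>0 y" by auto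
    then obtain x v where xv: "x \<in> P" "v \<in> V" "y = x \<otimes> v" unfolding set_mult_def by blast
    have "\<psi>0 (x \<otimes> v) = \<psi>0 x \<otimes> \<psi>0 v" using homN xv(1,2) PN VN by blast
    also have "\<dots> = \<chi> x \<otimes> v" using \<psi>0P[OF xv(1)] fixv[OF xv(2)] by simp
    finally have "z = \<chi> x \<otimes> v" using y(2) xv(3) by simp
    then show "z \<in> \<chi> ` P <#> V" using mem_setmult[of "\<chi> x" "\<chi> ` P" v V] xv by blast
  qed
  have \<psi>2: "restrict \<psi>0 (P <#> V) \<in> F (P <#> V) (\<chi> ` P <#> V)"
    by (rule F_codom[OF fs PVS IVS CS \<psi>1 im])
  have a1: "\<forall>x\<in>P. restrict \<psi>0 (P <#> V) x = \<chi> x"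
    using \<psi>0P prod_subgroup(2)[OF P V Z] by auto
  have a2: "\<forall>v\<in>V. restrict \<psi>0 (P <#> V) v = v"
    using fixv prod_subgroup(3)[OF P V Z] by auto
  show ?thesis using \<psi>2 a1 a2 by blast
qed

end


context group begin

lemma all_CF:
  assumes sat: "saturated_fusion_system p G F" and V: "subgroup V G" and Z: "V \<subseteq> centerS G (carrier G)"
    and wc: "F_weakly_closed G F V" and idV: "F V V = {restrict id V}"
    and P: "subgroup P G" and Q: "subgroup Q G" and \<phi>: "\<phi> \<in> F P Q"
  shows "\<phi> \<in> CF G F V P Q"
proof -
  have fs: "fusion_system G F" by (rule sat_fs[OF sat])
  have fin: "finite (carrier G)" by (rule sat_fin[OF sat])
  obtain P'' where cP: "F_conj G F P P''" and fcP: "fully_centralized G F P''"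
    using exists_fully_centralized[OF fs fin P] by blast
  have P'': "subgroup P'' G" using cP unfolding F_conj_def by simp
  obtain \<alpha> where \<alpha>: "\<alpha> \<in> F P P''" "\<alpha> ` P = P''" using cP unfolding F_conj_def by blast
  let ?P1 = "\<phi> ` P"
  have P1: "subgroup ?P1 G" by (rule F_img_subgroup[OF fs P Q \<phi>])
  have injphi: "inj_on \<phi> P" by (rule F_facts(3)[OF fs P Q \<phi>])
  let ?\<iota> = "restrict (inv_into P \<phi>) ?P1"
  have \<iota>: "?\<iota> \<in> F ?P1 P" by (rule fs_inv[OF fs P Q \<phi>])
  let ?\<beta> = "restrict (\<alpha> \<circ> ?\<iota>) ?P1"
  have \<beta>: "?\<beta> \<in> F ?P1 P''" by (rule fs_comp[OF fs P1 P P'' \<iota> \<alpha>(1)])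
  have "?\<iota> ` ?P1 = inv_into P \<phi> ` \<phi> ` P" by simp
  also have "\<dots> = P" using injphi by simp
  finally have \<iota>im: "?\<iota> ` ?P1 = P" .
  have "?\<beta> ` ?P1 = (\<alpha> \<circ> ?\<iota>) ` ?P1" by simp
  also have "\<dots> = \<alpha> ` (?\<iota> ` ?P1)" by (simp add: image_comp)
  also have "\<dots> = P''" using \<iota>im \<alpha>(2) by simp
  finally have \<beta>im: "?\<beta> ` ?P1 = P''" .
  have \<beta>\<phi>: "?\<beta> (\<phi> x) = \<alpha> x" if x: "x \<in> P" for x
    using x inv_into_f_f[OF injphi x] by simp
  obtain \<psi>a where \<psi>a: "\<psi>a \<in> F (P <#> V) (\<alpha> ` P <#> V)" "\<And>x. x \<in> P \<Longrightarrow> \<psi>a x = \<alpha> x" "\<And>v. v \<in> V \<Longrightarrow> \<psi>a v = v"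
    using EXT[OF sat V Z wc idV P P'' \<alpha>(1)] fcP \<alpha>(2) by auto
  obtain \<psi>b where \<psi>b: "\<psi>b \<in> F (?P1 <#> V) (?\<beta> ` ?P1 <#> V)" "\<And>x. x \<in> ?P1 \<Longrightarrow> \<psi>b x = ?\<beta> x" "\<And>v. v \<in> V \<Longrightarrow> \<psi>b v = v"
    using EXT[OF sat V Z wc idV P1 P'' \<beta>] fcP \<beta>im by auto
  have PVS: "subgroup (P <#> V) G" by (rule prod_subgroup(1)[OF P V Z])
  have P1VS: "subgroup (?P1 <#> V) G" by (rule prod_subgroup(1)[OF P1 V Z])
  have P''VS: "subgroup (P'' <#> V) G" by (rule prod_subgroup(1)[OF P'' V Z])
  have QVS: "subgroup (Q <#> V) G" by (rule prod_subgroup(1)[OF Q V Z])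
  have \<psi>a': "\<psi>a \<in> F (P <#> V) (P'' <#> V)" using \<psi>a(1) \<alpha>(2) by simp
  have \<psi>b': "\<psi>b \<in> F (?P1 <#> V) (P'' <#> V)" using \<psi>b(1) \<beta>im by simp
  let ?T = "\<psi>b ` (?P1 <#> V)"
  have TS: "subgroup ?T G" by (rule F_img_subgroup[OF fs P1VS P''VS \<psi>b'])
  have homa: "\<forall>x\<in>P <#> V. \<forall>y\<in>P <#> V. \<psi>a (x \<otimes> y) = \<psi>a x \<otimes> \<psi>a y" by (rule F_facts(4)[OF fs PVS P''VS \<psi>a'])
  have homb: "\<forall>x\<in>?P1 <#> V. \<forall>y\<in>?P1 <#> V. \<psi>b (x \<otimes> y) = \<psi>b x \<otimes> \<psi>b y" by (rule F_facts(4)[OF fs P1VS P''VS \<psi>b'])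
  have injb: "inj_on \<psi>b (?P1 <#> V)" by (rule F_facts(3)[OF fs P1VS P''VS \<psi>b'])
  have PPV: "P \<subseteq> P <#> V" and VPV: "V \<subseteq> P <#> V" using prod_subgroup(2,3)[OF P V Z] by auto
  have P1PV: "?P1 \<subseteq> ?P1 <#> V" and VP1V: "V \<subseteq> ?P1 <#> V" using prod_subgroup(2,3)[OF P1 V Z] by auto
  have ima: "\<psi>a ` (P <#> V) \<subseteq> ?T"
  proof
    fix z assume "z \<in> \<psi>a ` (P <#> V)"
    then obtain y where y: "y \<in> P <#> V" "z = \<psi>a y" by blast
    then obtain x v where xv: "x \<in> P" "v \<in> V" "y = x \<otimes> v" unfolding set_mult_def by blast
    have x1: "\<phi> x \<in> ?P1" using xv(1) by blast
    have m0: "x \<in> P <#> V" "v \<in> P <#> V" using xv(1,2) PPV VPV by auto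
    have "\<psi>a (x \<otimes> v) = \<psi>a x \<otimes> \<psi>a v" using homa[rule_format, OF m0] .
    also have "\<dots> = \<alpha> x \<otimes> v" using \<psi>a(2)[OF xv(1)] \<psi>a(3)[OF xv(2)] by simp
    also have "\<dots> = \<psi>b (\<phi> x) \<otimes> \<psi>b v" using \<psi>b(2)[OF x1] \<psi>b(3)[OF xv(2)] \<beta>\<phi>[OF xv(1)] by simp
    also have "\<dots> = \<psi>b (\<phi> x \<otimes> v)"
    proof -
      have m: "\<phi> x \<in> ?P1 <#> V" "v \<in> ?P1 <#> V" using x1 xv(2) P1PV VP1V by auto
      show ?thesis using homb[rule_format, OF m] by simp
    qed
    finally have "z = \<psi>b (\<phi> x \<otimes> v)" using y(2) xv(3) by simp
    moreover have "\<phi> x \<otimes> v \<in> ?P1 <#> V" by (rule mem_setmult[OF x1 xv(2)])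
    ultimately show "z \<in> ?T" by blast
  qed
  have \<psi>a'': "\<psi>a \<in> F (P <#> V) ?T" by (rule F_codom[OF fs PVS TS P''VS \<psi>a' ima])
  let ?\<kappa> = "restrict (inv_into (?P1 <#> V) \<psi>b) ?T"
  have \<kappa>: "?\<kappa> \<in> F ?T (?P1 <#> V)" by (rule fs_inv[OF fs P1VS P''VS \<psi>b'])
  let ?\<psi> = "restrict (?\<kappa> \<circ> \<psi>a) (P <#> V)"
  have \<psi>: "?\<psi> \<in> F (P <#> V) (?P1 <#> V)" by (rule fs_comp[OF fs PVS TS P1VS \<psi>a'' \<kappa>])
  have im\<psi>: "?\<psi> ` (P <#> V) \<subseteq> Q <#> V"
  proof -
    have "?\<psi> ` (P <#> V) \<subseteq> ?P1 <#> V" by (rule F_facts(2)[OF fs PVS P1VS \<psi>])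
    moreover have "?P1 <#> V \<subseteq> Q <#> V"
    proof
      fix y assume "y \<in> ?P1 <#> V"
      then obtain x v where xv: "x \<in> ?P1" "v \<in> V" "y = x \<otimes> v" unfolding set_mult_def by blast
      have "x \<in> Q" using xv(1) F_facts(2)[OF fs P Q \<phi>] by blast
      then show "y \<in> Q <#> V" using mem_setmult[OF _ xv(2)] xv(3) by blast
    qed
    ultimately show ?thesis by (rule subset_trans)
  qed
  have \<psi>Q: "?\<psi> \<in> F (P <#> V) (Q <#> V)" by (rule F_codom[OF fs PVS QVS P1VS \<psi> im\<psi>])
  have eP: "?\<psi> x = \<phi> x" if x: "x \<in> P" for x
  proof -
    have x1: "\<phi> x \<in> ?P1" using x by blast
    have "\<psi>a x = \<psi>b (\<phi> x)" using \<psi>a(2)[OF x] \<psi>b(2)[OF x1] \<beta>\<phi>[OF x] by simp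
    moreover have "\<psi>a x \<in> ?T" using ima x PPV by blast
    ultimately have "?\<psi> x = inv_into (?P1 <#> V) \<psi>b (\<psi>b (\<phi> x))" using x PPV by auto
    also have "\<dots> = \<phi> x" using inv_into_f_f[OF injb] x1 P1PV by blast
    finally show ?thesis .
  qed
  have eV: "?\<psi> v = v" if v: "v \<in> V" for v
  proof -
    have "\<psi>a v = \<psi>b v" using \<psi>a(3)[OF v] \<psi>b(3)[OF v] by simp
    moreover have "\<psi>a v \<in> ?T" using ima v VPV by blast
    ultimately have "?\<psi> v = inv_into (?P1 <#> V) \<psi>b (\<psi>b v)" using v VPV by auto
    also have "\<dots> = v" using inv_into_f_f[OF injb] v VP1V by blast
    finally show ?thesis .
  qed
  have "\<exists>\<psi>\<in>F (P <#> V) (Q <#> V). (\<forall>x\<in>P. \<psi> x = \<phi> x) \<and> (\<forall>x\<in>V. \<psi> x = x)"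
    using \<psi>Q eP eV by blast
  then show ?thesis unfolding CF_def using \<phi> by blast
qed

end


theorem proposition5p2:
  fixes p :: nat and S :: "('a, 'b) monoid_scheme"
    and F :: "'a set \<Rightarrow> 'a set \<Rightarrow> ('a \<Rightarrow> 'a) set"
    and L :: "('a, 'm) linking" and V :: "'a set"
  assumes "p_local_finite_group p S F L"
    and "subgroup V S" and "V \<subseteq> centerS S (carrier S)"
    and "F_weakly_closed S F V"
    and "\<exists>n. card (F V V) = p ^ n"
  shows "centralizerS S V = carrier S
    \<and> (\<forall>P Q. subgroup P S \<longrightarrow> subgroup Q S \<longrightarrow> CF S F V P Q = F P Q)
    \<and> (\<forall>P Q. F_centric S F P \<longrightarrow> F_centric S F Q \<longrightarrow> CL_Mor S F L V P Q = Mor L P Q)"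
proof -
  have sat: "saturated_fusion_system p S F" using assms(1) unfolding p_local_finite_group_def by simp
  have cls: "centric_linking_system S F L" using assms(1) unfolding p_local_finite_group_def by simp
  have grp: "group S" by (rule sat_grp[OF sat])
  note V = assms(2) and Z = assms(3) and wc = assms(4)
  have idV: "F V V = {restrict id V}" by (rule group.FVV[OF grp sat V Z wc assms(5)])
  have c1: "centralizerS S V = carrier S"
  proof
    show "centralizerS S V \<subseteq> carrier S" unfolding centralizerS_def by blast
    show "carrier S \<subseteq> centralizerS S V"
    proof
      fix g assume g: "g \<in> carrier S"
      have "\<forall>x\<in>V. g \<otimes>\<^bsub>S\<^esub> x = x \<otimes>\<^bsub>S\<^esub> g"
      proof
        fix x assume "x \<in> V"
        then have "x \<in> centerS S (carrier S)" using Z by blast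
        then show "g \<otimes>\<^bsub>S\<^esub> x = x \<otimes>\<^bsub>S\<^esub> g" using g unfolding centerS_def by simp
      qed
      then show "g \<in> centralizerS S V" unfolding centralizerS_def using g by simp
    qed
  qed
  have c2: "CF S F V P Q = F P Q" if P: "subgroup P S" and Q: "subgroup Q S" for P Q
  proof
    show "CF S F V P Q \<subseteq> F P Q" unfolding CF_def by blast
    show "F P Q \<subseteq> CF S F V P Q"
    proof
      fix \<phi> assume "\<phi> \<in> F P Q"
      then show "\<phi> \<in> CF S F V P Q" by (rule group.all_CF[OF grp sat V Z wc idV P Q])
    qed
  qed
  have c3: "CL_Mor S F L V P Q = Mor L P Q" if P: "F_centric S F P" and Q: "F_centric S F Q" for P Q
  proof
    show "CL_Mor S F L V P Q \<subseteq> Mor L P Q" unfolding CL_Mor_def by blast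
    show "Mor L P Q \<subseteq> CL_Mor S F L V P Q"
    proof
      fix f assume f: "f \<in> Mor L P Q"
      have PS: "subgroup P S" using P unfolding F_centric_def by simp
      have QS: "subgroup Q S" using Q unfolding F_centric_def by simp
      have "proj L P Q f \<in> F P Q" by (rule cls_proj[OF cls P Q f])
      then have "proj L P Q f \<in> CF S F V P Q" using c2[OF PS QS] by simp
      then show "f \<in> CL_Mor S F L V P Q" unfolding CL_Mor_def using f by simp
    qed
  qed
  show ?thesis using c1 c2 c3 by blast
qed

end
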